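(* Let $P\subseteq\mathbb R\times[0,\infty)$ be a countable set of points and let $\Gamma(P)$ be the graph with vertex set $P$ in which distinct $p_i=(x_i,y_i)$, $p_j=(x_j,y_j)$ are adjacent if and only if $|x_i-x_j|<e^{\frac12(y_i+y_j)}$. Then: (i) if $p_ip_j$ is an edge of $\Gamma(P)$ and $p_k\in P$ lies above the line segment $[p_i,p_j]$ (i.e. the segment $[p_i,p_j]$ intersects the vertical line through $p_k$ at a point below $p_k$), then at least one of $p_kp_i$, $p_kp_j$ is an edge of $\Gamma(P)$; (ii) if $p_ip_j$ and $p_kp_\ell$ are edges of $\Gamma(P)$ and the line segments $[p_i,p_j]$ and $[p_k,p_\ell]$ cross, then at least one of $p_ip_k, p_ip_\ell, p_jp_k, p_jp_\ell$ is an edge of $\Gamma(P)$. *)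

theory Defs
  imports "HOL-Analysis.Analysis"
begin

definition gamma_adj :: "real \<times> real \<Rightarrow> real \<times> real \<Rightarrow> bool" where
  "gamma_adj p q \<longleftrightarrow> p \<noteq> q \<and> \<bar>fst p - fst q\<bar> < exp ((snd p + snd q) / 2)"

definition gamma_edge :: "(real \<times> real) set \<Rightarrow> real \<times> real \<Rightarrow> real \<times> real \<Rightarrow> bool" where
  "gamma_edge P p q \<longleftrightarrow> p \<in> P \<and> q \<in> P \<and> gamma_adj p q"

definition above_segment :: "real \<times> real \<Rightarrow> real \<times> real \<Rightarrow> real \<times> real \<Rightarrow> bool" where
  "above_segment r p q \<longleftrightarrow> (\<exists>y. (fst r, y) \<in> closed_segment p q \<and> y < snd r)"

definition segments_cross :: "real \<times> real \<Rightarrow> real \<times> real \<Rightarrow> real \<times> real \<Rightarrow> real \<times> real \<Rightarrow> bool" where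
  "segments_cross a b c d \<longleftrightarrow>
     (\<exists>z. closed_segment a b \<inter> closed_segment c d = {z} \<and> z \<in> open_segment a b \<and> z \<in> open_segment c d)"

end

theory Submission
  imports Defs
begin

lemma seg_param:
  fixes p q r :: "real \<times> real"
  assumes "r \<in> closed_segment p q"
  shows "\<exists>u. 0 \<le> u \<and> u \<le> 1 \<and> fst r = (1-u)* fst p + u* fst q \<and> snd r = (1-u)* snd p + u* snd q"
  using assms unfolding closed_segment_def by auto

lemma seg_fst:
  fixes p q r :: "real \<times> real"
  assumes "r \<in> closed_segment p q"
  shows "\<bar>fst p - fst r\<bar> + \<bar>fst r - fst q\<bar> = \<bar>fst p - fst q\<bar>"
proof -
  obtain u where u: "0 \<le> u" "u \<le> 1" "fst r = (1-u)* fst p + u* fst q"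
    using seg_param[OF assms] by blast
  have "fst p - fst r = u * (fst p - fst q)" using u by (simp add: algebra_simps)
  moreover have "fst r - fst q = (1-u) * (fst p - fst q)" using u by (simp add: algebra_simps)
  ultimately have "\<bar>fst p - fst r\<bar> + \<bar>fst r - fst q\<bar> = u * \<bar>fst p - fst q\<bar> + (1-u) * \<bar>fst p - fst q\<bar>"
    using u by (simp add: abs_mult)
  thus ?thesis by (simp add: algebra_simps)
qed

lemma seg_snd:
  fixes p q r :: "real \<times> real"
  assumes "r \<in> closed_segment p q" "snd p \<le> snd q"
  shows "snd p \<le> snd r \<and> snd r \<le> snd q"
proof -
  obtain u where u: "0 \<le> u" "u \<le> 1" "snd r = (1-u)* snd p + u* snd q"
    using seg_param[OF assms(1)] by blast
  have "snd r = snd p + u * (snd q - snd p)" using u by (simp add: algebra_simps)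
  moreover have "0 \<le> u * (snd q - snd p)" using u assms(2) by simp
  moreover have "u * (snd q - snd p) \<le> snd q - snd p" using u assms(2)
    by (simp add: mult_left_le_one_le)
  ultimately show ?thesis by linarith
qed

lemma exp_half: "exp (((a::real) + b) / 2) = exp (a/2) * exp (b/2)"
  by (simp add: add_divide_distrib exp_add)

lemma key2:
  fixes a b c d z :: "real \<times> real"
  assumes e1: "\<bar>fst a - fst b\<bar> < exp ((snd a + snd b)/2)"
    and e2: "\<bar>fst c - fst d\<bar> < exp ((snd c + snd d)/2)"
    and z1: "z \<in> closed_segment a b" and z2: "z \<in> closed_segment c d"
    and o1: "snd a \<le> snd b" and o2: "snd c \<le> snd d"
  shows "\<bar>fst b - fst d\<bar> < exp ((snd b + snd d)/2) \<or> \<bar>fst a - fst c\<bar> < exp ((snd a + snd c)/2)"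
proof (rule ccontr)
  assume n: "\<not> ?thesis"
  define A where "A = exp (snd a / 2)"
  define B where "B = exp (snd b / 2)"
  define C where "C = exp (snd c / 2)"
  define D where "D = exp (snd d / 2)"
  have s1: "snd a \<le> snd z \<and> snd z \<le> snd b" using seg_snd[OF z1 o1] .
  have s2: "snd c \<le> snd z \<and> snd z \<le> snd d" using seg_snd[OF z2 o2] .
  have "A \<le> D" unfolding A_def D_def using s1 s2 by simp
  moreover have "C \<le> B" unfolding C_def B_def using s1 s2 by simp
  ultimately have "0 \<le> (B - C) * (D - A)" by simp
  hence ineq: "A*B + C*D \<le> B*D + A*C" by (simp add: algebra_simps)
  have h1: "\<bar>fst a - fst z\<bar> + \<bar>fst z - fst b\<bar> = \<bar>fst a - fst b\<bar>" using seg_fst[OF z1] .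
  have h2: "\<bar>fst c - fst z\<bar> + \<bar>fst z - fst d\<bar> = \<bar>fst c - fst d\<bar>" using seg_fst[OF z2] .
  have "\<bar>fst b - fst d\<bar> + \<bar>fst a - fst c\<bar> \<le> \<bar>fst a - fst b\<bar> + \<bar>fst c - fst d\<bar>"
    using h1 h2 by linarith
  also have "\<dots> < A*B + C*D" using e1 e2 unfolding A_def B_def C_def D_def exp_half by linarith
  finally have "\<bar>fst b - fst d\<bar> + \<bar>fst a - fst c\<bar> < B*D + A*C" using ineq by linarith
  moreover have "B*D \<le> \<bar>fst b - fst d\<bar>" "A*C \<le> \<bar>fst a - fst c\<bar>"
    using n unfolding A_def B_def C_def D_def exp_half by auto
  ultimately show False by linarith
qed

lemma adj_sym: "gamma_adj p q = gamma_adj q p"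
  unfolding gamma_adj_def by (metis abs_minus_commute add.commute)

lemma edge_sym: "gamma_edge P p q = gamma_edge P q p"
  unfolding gamma_edge_def using adj_sym by blast

lemma part1:
  assumes "gamma_edge P qa qb" "above_segment qk qa qb" "qk \<in> P" "snd qa \<le> snd qb"
  shows "gamma_edge P qk qa \<or> gamma_edge P qk qb"
proof (cases "qk = qb")
  case True
  then show ?thesis using assms(1) edge_sym by blast
next
  case False
  obtain y where y: "(fst qk, y) \<in> closed_segment qa qb" "y < snd qk"
    using assms(2) unfolding above_segment_def by blast
  have d: "\<bar>fst qa - fst qb\<bar> < exp ((snd qa + snd qb)/2)"
    using assms(1) unfolding gamma_edge_def gamma_adj_def by blast
  have "snd qa \<le> y" using seg_snd[OF y(1) assms(4)] by simp
  have "\<bar>fst qk - fst qb\<bar> \<le> \<bar>fst qa - fst qb\<bar>" using seg_fst[OF y(1)] by simp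
  also have "\<dots> < exp ((snd qa + snd qb)/2)" by (rule d)
  also have "\<dots> \<le> exp ((snd qk + snd qb)/2)" using \<open>snd qa \<le> y\<close> y(2) by simp
  finally have "gamma_edge P qk qb"
    using False assms(1,3) unfolding gamma_edge_def gamma_adj_def by blast
  then show ?thesis by blast
qed

lemma cross_distinct:
  fixes a b c d p q :: "real \<times> real"
  assumes "segments_cross a b c d" "p \<in> {a,b}" "q \<in> {c,d}"
  shows "p \<noteq> q"
proof
  assume pq: "p = q"
  obtain z where z: "closed_segment a b \<inter> closed_segment c d = {z}"
    "z \<in> open_segment a b" using assms(1) unfolding segments_cross_def by blast
  have "p \<in> closed_segment a b" using assms(2) by auto
  moreover have "p \<in> closed_segment c d" using assms(3) pq by auto
  ultimately have "p = z" using z(1) by blast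
  thus False using z(2) assms(2) unfolding open_segment_def by auto
qed

lemma part2:
  fixes a b c d :: "real \<times> real"
  assumes "gamma_edge P a b" "gamma_edge P c d" "segments_cross a b c d"
    "snd a \<le> snd b" "snd c \<le> snd d"
  shows "gamma_edge P b d \<or> gamma_edge P a c"
proof -
  obtain z where z: "closed_segment a b \<inter> closed_segment c d = {z}"
    using assms(3) unfolding segments_cross_def by blast
  have z1: "z \<in> closed_segment a b" and z2: "z \<in> closed_segment c d" using z by blast+
  have e1: "\<bar>fst a - fst b\<bar> < exp ((snd a + snd b)/2)"
    using assms(1) unfolding gamma_edge_def gamma_adj_def by blast
  have e2: "\<bar>fst c - fst d\<bar> < exp ((snd c + snd d)/2)"
    using assms(2) unfolding gamma_edge_def gamma_adj_def by blast
  have "\<bar>fst b - fst d\<bar> < exp ((snd b + snd d)/2) \<or> \<bar>fst a - fst c\<bar> < exp ((snd a + snd c)/2)"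
    by (rule key2[OF e1 e2 z1 z2 assms(4,5)])
  moreover have "b \<noteq> d" "a \<noteq> c" using cross_distinct[OF assms(3), of b d] cross_distinct[OF assms(3), of a c] by simp_all
  ultimately show ?thesis using assms(1,2) unfolding gamma_edge_def gamma_adj_def by blast
qed

lemma cross_swap1: "\<And>a b c d :: real \<times> real. segments_cross a b c d \<Longrightarrow> segments_cross b a c d"
  unfolding segments_cross_def by (metis closed_segment_commute open_segment_commute)
lemma cross_swap2: "\<And>a b c d :: real \<times> real. segments_cross a b c d \<Longrightarrow> segments_cross a b d c"
  unfolding segments_cross_def by (metis closed_segment_commute open_segment_commute)

theorem lemma2p1:
  fixes P :: "(real \<times> real) set"
  assumes "countable P"
    and "\<forall>p\<in>P. snd p \<ge> 0"
  shows "(\<forall>pi\<in>P. \<forall>pj\<in>P. \<forall>pk\<in>P.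
           gamma_edge P pi pj \<and> above_segment pk pi pj
             \<longrightarrow> gamma_edge P pk pi \<or> gamma_edge P pk pj)
    \<and> (\<forall>pi\<in>P. \<forall>pj\<in>P. \<forall>pk\<in>P. \<forall>pl\<in>P.
           gamma_edge P pi pj \<and> gamma_edge P pk pl \<and> segments_cross pi pj pk pl
             \<longrightarrow> gamma_edge P pi pk \<or> gamma_edge P pi pl \<or> gamma_edge P pj pk \<or> gamma_edge P pj pl)"
proof (intro conjI ballI impI)
  fix pi pj pk
  assume h: "gamma_edge P pi pj \<and> above_segment pk pi pj" and pk: "pk \<in> P"
  show "gamma_edge P pk pi \<or> gamma_edge P pk pj"
  proof (cases "snd pi \<le> snd pj")
    case True
    then show ?thesis using part1 h pk by blast
  next
    case False
    have "gamma_edge P pj pi" using h edge_sym by blast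
    moreover have "above_segment pk pj pi" using h
      unfolding above_segment_def by (simp add: closed_segment_commute)
    ultimately show ?thesis using part1[of P pj pi pk] pk False by auto
  qed
next
  fix pi pj pk pl
  assume h: "gamma_edge P pi pj \<and> gamma_edge P pk pl \<and> segments_cross pi pj pk pl"
  have h1: "gamma_edge P pi pj" and h2: "gamma_edge P pk pl" and h3: "segments_cross pi pj pk pl"
    using h by blast+
  have e1: "gamma_edge P pj pi" using h1 edge_sym by blast
  have e2: "gamma_edge P pl pk" using h2 edge_sym by blast
  have c1: "segments_cross pj pi pk pl" using cross_swap1[OF h3] .
  have c2: "segments_cross pi pj pl pk" using cross_swap2[OF h3] .
  have c3: "segments_cross pj pi pl pk" using cross_swap2[OF c1] .
  show "gamma_edge P pi pk \<or> gamma_edge P pi pl \<or> gamma_edge P pj pk \<or> gamma_edge P pj pl"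
  proof (cases "snd pi \<le> snd pj")
    case T1: True
    show ?thesis
    proof (cases "snd pk \<le> snd pl")
      case True
      from part2[OF h1 h2 h3 T1 True] show ?thesis by blast
    next
      case False
      hence "snd pl \<le> snd pk" by linarith
      from part2[OF h1 e2 c2 T1 this] show ?thesis by blast
    qed
  next
    case F1: False
    hence T1: "snd pj \<le> snd pi" by linarith
    show ?thesis
    proof (cases "snd pk \<le> snd pl")
      case True
      from part2[OF e1 h2 c1 T1 True] show ?thesis by blast
    next
      case False
      hence "snd pl \<le> snd pk" by linarith
      from part2[OF e1 e2 c3 T1 this] show ?thesis by blast
    qed
  qed
qed

end
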